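(* A finite nonempty semigroup $S$ has a left zero or a right zero if and only if $S$ is $K$-thin and its group completion $GS$ is trivial.
   Context: An element $z\in S$ is a left zero if $zx=z$ for all $x\in S$, and a right zero if $xz=z$ for all $x\in S$. The group completion $GS$ is the image of $S$ under the left adjoint of the forgetful functor from groups to semigroups. For a finite nonempty semigroup $S$, the minimal ideal $K(S)$ is the intersection of all nonempty two-sided ideals of $S$. A Rees matrix semigroup $\mathcal{M}(H;I,J;p)$, for sets $I,J$, a group $H$ and a function $p\colon J\times I\to H$, is the set $I\times H\times J$ with product $(i,h,j)(i',h',j')=(i,h\,p(j,i')\,h',j')$. It is known that $K(S)$ is always isomorphic to such a Rees matrix semigroup with $H$ a finite group and $p$ normalized (i.e. $p(j_0,i)=e_H$ and $p(j,i_0)=e_H$ for some fixed $i_0\in I$, $j_0\in J$ and all $i,j$). $S$ is called $K$-thin if $K(S)$ has such a normalized Rees matrix structure with $|I|=1$ or $|J|=1$; equivalently, $K(S)$ is left-simple or right-simple. *)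

theory Defs
  imports "HOL-Algebra.Group"
begin

text \<open>Semigroups are modelled by the type class semigroup_mult on a finite type
  (so the semigroup S is the whole, automatically nonempty, finite universe).\<close>

definition left_zero :: "'a::semigroup_mult \<Rightarrow> bool" where
  "left_zero z \<longleftrightarrow> (\<forall>x. z * x = z)"

definition right_zero :: "'a::semigroup_mult \<Rightarrow> bool" where
  "right_zero z \<longleftrightarrow> (\<forall>x. x * z = z)"

definition sg_ideal :: "'a::semigroup_mult set \<Rightarrow> bool" where
  "sg_ideal I \<longleftrightarrow> I \<noteq> {} \<and> (\<forall>s i. i \<in> I \<longrightarrow> s * i \<in> I \<and> i * s \<in> I)"

definition minimal_ideal :: "'a::semigroup_mult set" where
  "minimal_ideal = \<Inter> {I. sg_ideal I}"

definition left_simple :: "'a::semigroup_mult set \<Rightarrow> bool" where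
  "left_simple T \<longleftrightarrow>
     (\<forall>L. L \<noteq> {} \<and> L \<subseteq> T \<and> (\<forall>t\<in>T. \<forall>l\<in>L. t * l \<in> L) \<longrightarrow> L = T)"

definition right_simple :: "'a::semigroup_mult set \<Rightarrow> bool" where
  "right_simple T \<longleftrightarrow>
     (\<forall>R. R \<noteq> {} \<and> R \<subseteq> T \<and> (\<forall>t\<in>T. \<forall>r\<in>R. r * t \<in> R) \<longrightarrow> R = T)"

definition K_thin :: "'a::semigroup_mult itself \<Rightarrow> bool" where
  "K_thin _ \<longleftrightarrow> left_simple (minimal_ideal :: 'a set) \<or> right_simple (minimal_ideal :: 'a set)"

text \<open>Group completion GS, via the standard presentation: words in letters s and s^{-1}
  (encoded as (s,True) and (s,False)), modulo the congruence generated by free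
  cancellation and the relations [s][t] = [s*t].\<close>

inductive gs_eq :: "('a::semigroup_mult \<times> bool) list \<Rightarrow> ('a \<times> bool) list \<Rightarrow> bool" where
  gs_refl: "gs_eq u u"
| gs_sym: "gs_eq u v \<Longrightarrow> gs_eq v u"
| gs_trans: "gs_eq u v \<Longrightarrow> gs_eq v w \<Longrightarrow> gs_eq u w"
| gs_cancel: "gs_eq (u @ [(x, b), (x, \<not> b)] @ v) (u @ v)"
| gs_mult: "gs_eq (u @ [(x, True), (y, True)] @ v) (u @ [(x * y, True)] @ v)"

definition gs_rel :: "(('a::semigroup_mult \<times> bool) list \<times> ('a \<times> bool) list) set" where
  "gs_rel = {(u, v). gs_eq u v}"

definition group_completion :: "'a::semigroup_mult itself \<Rightarrow> ('a \<times> bool) list set monoid" where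
  "group_completion _ =
     \<lparr> carrier = UNIV // (gs_rel :: (('a \<times> bool) list \<times> _) set),
       mult = (\<lambda>A B. gs_rel `` {(SOME u. u \<in> A) @ (SOME v. v \<in> B)}),
       one = gs_rel `` {[]} \<rparr>"

end

theory Submission
  imports Defs
begin

lemma gs_cong: "gs_eq u v \<Longrightarrow> gs_eq (p @ u @ q) (p @ v @ q)"
proof (induction rule: gs_eq.induct)
  case (gs_refl u) then show ?case by (rule gs_eq.gs_refl)
next
  case (gs_sym u v) from gs_sym.IH show ?case by (rule gs_eq.gs_sym)
next
  case (gs_trans u v w) then show ?case by (metis gs_eq.gs_trans)
next
  case (gs_cancel u x b v)
  then show ?case using gs_eq.gs_cancel[of "p @ u" x b "v @ q"] by simp
next
  case (gs_mult u x y v)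
  then show ?case using gs_eq.gs_mult[of "p @ u" x y "v @ q"] by simp
qed

lemma gs_all_trivial:
  assumes gen: "\<And>x::'a::semigroup_mult. gs_eq [(x, True)] []"
  shows "gs_eq (w :: ('a \<times> bool) list) []"
proof (induction w)
  case Nil then show ?case by (rule gs_refl)
next
  case (Cons a w)
  obtain x b where a: "a = (x, b)" by (cases a)
  have ab: "gs_eq [a] []"
  proof (cases b)
    case True then show ?thesis using gen a by simp
  next
    case False
    have "gs_eq ([] @ [] @ [(x, False)]) ([] @ [(x, True)] @ [(x, False)])"
      by (rule gs_cong, rule gs_sym, rule gen)
    moreover have "gs_eq ([] @ [(x, True), (x, \<not> True)] @ []) ([] @ [])"
      by (rule gs_eq.gs_cancel)
    ultimately show ?thesis using False a by (auto intro: gs_trans)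
  qed
  have "gs_eq ([] @ [a] @ w) ([] @ [] @ w)" using ab by (rule gs_cong)
  then show ?case using Cons by (auto intro: gs_trans)
qed

lemma carrier_triv:
  assumes "\<And>w::('a::semigroup_mult \<times> bool) list. gs_eq w []"
  shows "carrier (group_completion TYPE('a)) = {\<one>\<^bsub>group_completion TYPE('a)\<^esub>}"
proof -
  have "\<And>x::('a \<times> bool) list. gs_rel `` {x} = gs_rel `` {[]}"
    unfolding gs_rel_def using assms by (auto intro: gs_trans gs_sym)
  then show ?thesis unfolding group_completion_def quotient_def by auto
qed

lemma carrier_triv_D:
  assumes "carrier (group_completion TYPE('a)) = {\<one>\<^bsub>group_completion TYPE('a)\<^esub>}"
  shows "gs_eq [((s::'a::semigroup_mult), True)] []"
proof -
  have "gs_rel `` {[(s, True)]} \<in> UNIV // (gs_rel :: (('a \<times> bool) list \<times> _) set)"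
    by (rule quotientI) simp
  then have "gs_rel `` {[(s, True)]} = gs_rel `` {[]}"
    using assms unfolding group_completion_def by simp
  moreover have "[(s, True)] \<in> gs_rel `` {[(s, True)]}" unfolding gs_rel_def by (auto intro: gs_refl)
  ultimately have "gs_eq [] [(s, True)]" unfolding gs_rel_def by auto
  then show ?thesis by (rule gs_sym)
qed

lemma left_zero_ideal: "sg_ideal {z::'a::semigroup_mult. left_zero z} \<or> \<not> (\<exists>z::'a. left_zero z)"
  unfolding sg_ideal_def left_zero_def by (auto simp: mult.assoc)

lemma right_zero_ideal: "sg_ideal {z::'a::semigroup_mult. right_zero z} \<or> \<not> (\<exists>z::'a. right_zero z)"
  unfolding sg_ideal_def right_zero_def by (auto simp: mult.assoc[symmetric])

lemma min_ideal_sub: "sg_ideal I \<Longrightarrow> minimal_ideal \<subseteq> I"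
  unfolding minimal_ideal_def by auto

lemma min_ideal_props:
  shows "sg_ideal (minimal_ideal :: 'a::{semigroup_mult,finite} set)"
proof -
  have U: "sg_ideal (UNIV :: 'a set)" unfolding sg_ideal_def by simp
  have "\<exists>M :: 'a set. sg_ideal M \<and> (\<forall>I :: 'a set. sg_ideal I \<longrightarrow> card M \<le> card I)"
    by (rule ex_has_least_nat[where P = "sg_ideal :: 'a set \<Rightarrow> bool" and k = UNIV and m = card, OF U])
  then obtain M :: "'a set" where M: "sg_ideal M" and Mm0: "\<forall>I :: 'a set. sg_ideal I \<longrightarrow> card M \<le> card I"
    by blast
  have Mm: "\<And>I :: 'a set. sg_ideal I \<Longrightarrow> card M \<le> card I" using Mm0 by simp
  have "M \<subseteq> I" if I: "sg_ideal I" for I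
  proof -
    obtain m where m: "m \<in> M" using M unfolding sg_ideal_def by blast
    obtain i where i: "i \<in> I" using I unfolding sg_ideal_def by blast
    have Mc: "\<And>s x. x \<in> M \<Longrightarrow> s * x \<in> M \<and> x * s \<in> M" using M unfolding sg_ideal_def by blast
    have Ic: "\<And>s x. x \<in> I \<Longrightarrow> s * x \<in> I \<and> x * s \<in> I" using I unfolding sg_ideal_def by blast
    have "m * i \<in> M \<inter> I" using Mc[OF m] Ic[OF i] by blast
    then have "sg_ideal (M \<inter> I)" unfolding sg_ideal_def using Mc Ic by blast
    then have "card M \<le> card (M \<inter> I)" by (rule Mm)
    moreover have "finite M" by simp
    ultimately have "M \<inter> I = M" using card_seteq[of M "M \<inter> I"] by blast
    then show ?thesis by blast
  qed
  then have sub1: "M \<subseteq> minimal_ideal" unfolding minimal_ideal_def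
    by (intro Inter_greatest) simp
  have sub2: "minimal_ideal \<subseteq> M" unfolding minimal_ideal_def
    by (rule Inter_lower) (simp add: M)
  have "minimal_ideal = M" using sub1 sub2 by (rule subset_antisym[rotated])
  then show ?thesis using M by simp
qed

fun ract :: "'a::semigroup_mult set \<Rightarrow> ('a \<times> bool) list \<Rightarrow> 'a \<Rightarrow> 'a" where
  "ract K [] x = x"
| "ract K ((s, b) # w) x = ract K w (if b then x * s else inv_into K (\<lambda>y. y * s) x)"

lemma ract_append: "ract K (u @ v) x = ract K v (ract K u x)"
  by (induction K u x rule: ract.induct) auto

lemma ract_in:
  assumes bij: "\<And>s. bij_betw (\<lambda>y. y * s) K K"
  shows "x \<in> K \<Longrightarrow> ract K w x \<in> K"
proof (induction w arbitrary: x)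
  case (Cons a w)
  obtain s b where a: "a = (s, b)" by (cases a)
  have "x * s \<in> K" using bij[of s] Cons.prems unfolding bij_betw_def by auto
  moreover have "inv_into K (\<lambda>y. y * s) x \<in> K"
    using bij[of s] Cons.prems unfolding bij_betw_def by (auto intro: inv_into_into)
  ultimately show ?case using Cons.IH a by auto
qed simp

lemma ract_eq:
  assumes bij: "\<And>s. bij_betw (\<lambda>y. y * s) K K"
  shows "gs_eq u v \<Longrightarrow> \<forall>x\<in>K. ract K u x = ract K v x"
proof (induction rule: gs_eq.induct)
  case (gs_cancel u s b v)
  have "\<forall>x\<in>K. ract K [(s, b), (s, \<not> b)] x = x"
  proof
    fix x assume x: "x \<in> K"
    show "ract K [(s, b), (s, \<not> b)] x = x"
      using bij_betw_inv_into_right[OF bij[of s] x] bij_betw_inv_into_left[OF bij[of s] x] by auto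
  qed
  moreover have "\<forall>x\<in>K. ract K u x \<in> K" using ract_in[OF bij] by auto
  ultimately show ?case by (simp add: ract_append)
next
  case (gs_mult u x y v)
  then show ?case by (simp add: ract_append mult.assoc)
qed auto

fun lact :: "'a::semigroup_mult set \<Rightarrow> ('a \<times> bool) list \<Rightarrow> 'a \<Rightarrow> 'a" where
  "lact K [] x = x"
| "lact K ((s, b) # w) x = (if b then s * lact K w x else inv_into K (\<lambda>y. s * y) (lact K w x))"

lemma lact_append: "lact K (u @ v) x = lact K u (lact K v x)"
  by (induction K u x rule: lact.induct) auto

lemma lact_in:
  assumes bij: "\<And>s. bij_betw (\<lambda>y. s * y) K K"
  shows "x \<in> K \<Longrightarrow> lact K w x \<in> K"
proof (induction w arbitrary: x)
  case (Cons a w)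
  obtain s b where a: "a = (s, b)" by (cases a)
  have "lact K w x \<in> K" using Cons by auto
  then have "s * lact K w x \<in> K" "inv_into K (\<lambda>y. s * y) (lact K w x) \<in> K"
    using bij[of s] unfolding bij_betw_def by (auto intro: inv_into_into)
  then show ?case using a by auto
qed simp

lemma lact_eq:
  assumes bij: "\<And>s. bij_betw (\<lambda>y. s * y) K K"
  shows "gs_eq u v \<Longrightarrow> \<forall>x\<in>K. lact K u x = lact K v x"
proof (induction rule: gs_eq.induct)
  case (gs_cancel u s b v)
  have inK: "x \<in> K \<Longrightarrow> lact K w x \<in> K" for w x using lact_in[OF bij] by auto
  have "\<forall>x\<in>K. lact K [(s, b), (s, \<not> b)] x = x"
  proof
    fix x assume x: "x \<in> K"
    show "lact K [(s, b), (s, \<not> b)] x = x"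
      using bij_betw_inv_into_right[OF bij[of s] x] bij_betw_inv_into_left[OF bij[of s] x] by auto
  qed
  then have "\<forall>x\<in>K. lact K [(s, b), (s, \<not> b)] (lact K v x) = lact K v x" using inK by blast
  then show ?case by (simp only: lact_append) simp
next
  case (gs_mult u x y v)
  then show ?case by (simp add: lact_append mult.assoc)
qed auto

theorem proposition7p2:
  shows "(\<exists>z::'a::{semigroup_mult, finite}. left_zero z \<or> right_zero z) \<longleftrightarrow>
         (K_thin TYPE('a) \<and>
          carrier (group_completion TYPE('a)) = {\<one>\<^bsub>group_completion TYPE('a)\<^esub>})"
proof
  assume "\<exists>z::'a. left_zero z \<or> right_zero z"
  then obtain z :: 'a where z: "left_zero z \<or> right_zero z" by blast
  show "K_thin TYPE('a) \<and> carrier (group_completion TYPE('a)) = {\<one>\<^bsub>group_completion TYPE('a)\<^esub>}"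
  proof (cases "left_zero z")
    case True
    have sub: "(minimal_ideal :: 'a set) \<subseteq> {z. left_zero z}"
    proof -
      have "sg_ideal {z::'a. left_zero z}" using left_zero_ideal True by blast
      then show ?thesis by (rule min_ideal_sub)
    qed
    have "left_simple (minimal_ideal :: 'a set)"
      unfolding left_simple_def
    proof (intro allI impI)
      fix L :: "'a set" assume L: "L \<noteq> {} \<and> L \<subseteq> minimal_ideal \<and> (\<forall>t\<in>minimal_ideal. \<forall>l\<in>L. t * l \<in> L)"
      then obtain l where l: "l \<in> L" by auto
      have "t \<in> L" if "t \<in> minimal_ideal" for t
      proof -
        have "left_zero t" using that sub by blast
        then have "t * l = t" unfolding left_zero_def by blast
        moreover have "t * l \<in> L" using L l that by blast
        ultimately show ?thesis by simp
      qed
      then show "L = minimal_ideal" using L by auto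
    qed
    moreover have "gs_eq [(x, True)] []" for x :: 'a
    proof -
      have "gs_eq ([] @ [(z, False), (z, \<not> False)] @ [(x, True)]) ([] @ [(x, True)])"
        by (rule gs_cancel)
      moreover have "gs_eq ([(z, False)] @ [(z, True), (x, True)] @ []) ([(z, False)] @ [(z * x, True)] @ [])"
        by (rule gs_mult)
      moreover have "gs_eq ([] @ [(z, False), (z, \<not> False)] @ []) ([] @ [])"
        by (rule gs_cancel)
      moreover have "z * x = z" using True unfolding left_zero_def by auto
      ultimately have 1: "gs_eq [(x, True)] [(z, False), (z, True), (x, True)]"
        and 2: "gs_eq [(z, False), (z, True), (x, True)] [(z, False), (z, True)]"
        and 3: "gs_eq [(z, False), (z, True)] []"
        by (simp_all add: gs_sym)
      show ?thesis by (rule gs_trans[OF 1 gs_trans[OF 2 3]])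
    qed
    ultimately show ?thesis unfolding K_thin_def
      using carrier_triv[OF gs_all_trivial] by blast
  next
    case False
    then have R: "right_zero z" using z by auto
    have sub: "(minimal_ideal :: 'a set) \<subseteq> {z. right_zero z}"
    proof -
      have "sg_ideal {z::'a. right_zero z}" using right_zero_ideal R by blast
      then show ?thesis by (rule min_ideal_sub)
    qed
    have "right_simple (minimal_ideal :: 'a set)"
      unfolding right_simple_def
    proof (intro allI impI)
      fix L :: "'a set" assume L: "L \<noteq> {} \<and> L \<subseteq> minimal_ideal \<and> (\<forall>t\<in>minimal_ideal. \<forall>l\<in>L. l * t \<in> L)"
      then obtain l where l: "l \<in> L" by auto
      have "t \<in> L" if "t \<in> minimal_ideal" for t
      proof -
        have "right_zero t" using that sub by blast
        then have "l * t = t" unfolding right_zero_def by blast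
        moreover have "l * t \<in> L" using L l that by blast
        ultimately show ?thesis by simp
      qed
      then show "L = minimal_ideal" using L by auto
    qed
    moreover have "gs_eq [(x, True)] []" for x :: 'a
    proof -
      have "gs_eq ([(x, True)] @ [(z, True), (z, \<not> True)] @ []) ([(x, True)] @ [])"
        by (rule gs_cancel)
      moreover have "gs_eq ([] @ [(x, True), (z, True)] @ [(z, False)]) ([] @ [(x * z, True)] @ [(z, False)])"
        by (rule gs_mult)
      moreover have "gs_eq ([] @ [(z, True), (z, \<not> True)] @ []) ([] @ [])"
        by (rule gs_cancel)
      moreover have "x * z = z" using R unfolding right_zero_def by auto
      ultimately have 1: "gs_eq [(x, True)] [(x, True), (z, True), (z, False)]"
        and 2: "gs_eq [(x, True), (z, True), (z, False)] [(z, True), (z, False)]"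
        and 3: "gs_eq [(z, True), (z, False)] []"
        by (simp_all add: gs_sym)
      show ?thesis by (rule gs_trans[OF 1 gs_trans[OF 2 3]])
    qed
    ultimately show ?thesis unfolding K_thin_def
      using carrier_triv[OF gs_all_trivial] by blast
  qed
next
  assume A: "K_thin TYPE('a) \<and> carrier (group_completion TYPE('a)) = {\<one>\<^bsub>group_completion TYPE('a)\<^esub>}"
  let ?K = "minimal_ideal :: 'a set"
  have KI: "sg_ideal ?K" by (rule min_ideal_props)
  then obtain a where a: "a \<in> ?K" unfolding sg_ideal_def by auto
  have KIm: "\<And>s i. i \<in> ?K \<Longrightarrow> s * i \<in> ?K \<and> i * s \<in> ?K" using KI unfolding sg_ideal_def by blast
  have fin: "finite ?K" by simp
  have triv: "gs_eq [(s, True)] []" for s :: 'a using A carrier_triv_D by blast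
  show "\<exists>z::'a. left_zero z \<or> right_zero z"
  proof (cases "left_simple ?K")
    case True
    have bij: "bij_betw (\<lambda>y. y * s) ?K ?K" for s
    proof -
      have into: "(\<lambda>y. y * s) ` ?K \<subseteq> ?K" using KIm by auto
      have as: "a * s \<in> ?K" using KIm a by auto
      let ?L = "(\<lambda>k. k * (a * s)) ` ?K"
      have "?L \<noteq> {}" using a by auto
      moreover have "?L \<subseteq> ?K" using KIm as by auto
      moreover have "\<forall>t\<in>?K. \<forall>l\<in>?L. t * l \<in> ?L"
      proof (intro ballI)
        fix t l assume t: "t \<in> ?K" and l: "l \<in> ?L"
        then obtain k where k: "k \<in> ?K" "l = k * (a * s)" by auto
        have "t * l = (t * k) * (a * s)" using k by (simp add: mult.assoc)
        moreover have "t * k \<in> ?K" using KIm k by auto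
        ultimately show "t * l \<in> ?L" by (simp only:) (rule imageI)
      qed
      ultimately have "?L = ?K" by (intro True[unfolded left_simple_def, rule_format] conjI)
      have "?K \<subseteq> (\<lambda>y. y * s) ` ?K"
      proof
        fix x assume "x \<in> ?K"
        then obtain k where k: "k \<in> ?K" "x = k * (a * s)" using \<open>?L = ?K\<close> by blast
        have "x = (k * a) * s" using k by (simp add: mult.assoc)
        moreover have "k * a \<in> ?K" using KIm a by auto
        ultimately show "x \<in> (\<lambda>y. y * s) ` ?K" by (simp only:) (rule imageI)
      qed
      then have eq: "(\<lambda>y. y * s) ` ?K = ?K" using into by blast
      then show ?thesis using eq_card_imp_inj_on[OF fin] unfolding bij_betw_def by metis
    qed
    have "a * s = a" for s
      using ract_eq[OF bij, OF triv[of s]] a by auto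
    then show ?thesis unfolding left_zero_def by auto
  next
    case False
    then have True: "right_simple ?K" using A unfolding K_thin_def by auto
    have bij: "bij_betw (\<lambda>y. s * y) ?K ?K" for s
    proof -
      have into: "(\<lambda>y. s * y) ` ?K \<subseteq> ?K" using KIm by auto
      have as: "s * a \<in> ?K" using KIm a by auto
      let ?L = "(\<lambda>k. (s * a) * k) ` ?K"
      have "?L \<noteq> {}" using a by auto
      moreover have "?L \<subseteq> ?K" using KIm as by auto
      moreover have "\<forall>t\<in>?K. \<forall>l\<in>?L. l * t \<in> ?L"
      proof (intro ballI)
        fix t l assume t: "t \<in> ?K" and l: "l \<in> ?L"
        then obtain k where k: "k \<in> ?K" "l = (s * a) * k" by auto
        have "l * t = (s * a) * (k * t)" using k by (simp add: mult.assoc)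
        moreover have "k * t \<in> ?K" using KIm k by auto
        ultimately show "l * t \<in> ?L" by (simp only:) (rule imageI)
      qed
      ultimately have "?L = ?K" by (intro True[unfolded right_simple_def, rule_format] conjI)
      have "?K \<subseteq> (\<lambda>y. s * y) ` ?K"
      proof
        fix x assume "x \<in> ?K"
        then obtain k where k: "k \<in> ?K" "x = (s * a) * k" using \<open>?L = ?K\<close> by blast
        have "x = s * (a * k)" using k by (simp add: mult.assoc)
        moreover have "a * k \<in> ?K" using KIm a by auto
        ultimately show "x \<in> (\<lambda>y. s * y) ` ?K" by (simp only:) (rule imageI)
      qed
      then have eq: "(\<lambda>y. s * y) ` ?K = ?K" using into by blast
      then show ?thesis using eq_card_imp_inj_on[OF fin] unfolding bij_betw_def by metis
    qed
    have "s * a = a" for s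
      using lact_eq[OF bij, OF triv[of s]] a by auto
    then show ?thesis unfolding right_zero_def by auto
  qed
qed

end
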